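(* Let $S\in Sp(4n,\mathbb{R})$ be such that \begin{equation*} S\begin{pmatrix} \varGamma & 0 \\ 0 & \varGamma \end{pmatrix}S^{T}=\begin{pmatrix} \cdot & 0 \\ 0 & * \end{pmatrix} \quad \text{for all covariance matrices}\quad\varGamma\in\mathbb{R}^{2n\times 2n}, \end{equation*} where $*,\cdot$ denote arbitrary covariance matrices in $\mathbb{R}^{2n\times 2n}$ (i.e. the output is block diagonal with $2n\times 2n$ blocks). Then \begin{equation*} \begin{split} S&= \begin{pmatrix} X & 0 \\ 0 & Y \end{pmatrix}\frac{1}{\sqrt{1+\alpha^{2}}} \begin{pmatrix} \mathbb{1}_{2n} & \alpha\mathbb{1}_{2n}\\ -\alpha\mathbb{1}_{2n} & \mathbb{1}_{2n} \end{pmatrix} \quad\text{or}\quad S= \begin{pmatrix} 0 & X \\ Y & 0 \end{pmatrix}\frac{1}{\sqrt{1+\gamma^{2}}} \begin{pmatrix} \mathbb{1}_{2n} & -\gamma\mathbb{1}_{2n}\\ \gamma\mathbb{1}_{2n} & \mathbb{1}_{2n} \end{pmatrix}, \end{split} \end{equation*} where $X,Y\in Sp(2n,\mathbb{R})$, $\alpha,\gamma\in\mathbb{R}\cup\{\pm\infty\}$, and $\mathbb{1}_{2n}$ is the $2n\times 2n$ identity matrix.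
   Context: Setting: $n$-mode (and $2n$-mode) bosonic continuous-variable systems with canonical operators $R=(Q_1,P_1,\ldots,Q_n,P_n)$ satisfying $[R_k,R_l]=i\sigma_{kl}$, where $\sigma=\bigoplus_{i=1}^{n}\begin{pmatrix}0&1\\-1&0\end{pmatrix}$. $Sp(2m,\mathbb{R})$ denotes the group of real $2m\times 2m$ matrices $S$ with $S\sigma S^{T}=\sigma$ (with $\sigma$ the symplectic form of the appropriate size). A covariance matrix (CM) of an $n$-mode state is a real symmetric $2n\times 2n$ matrix $\varGamma$ with entries $\varGamma_{kl}=\mathrm{Tr}[\rho\{R_k-d_k,R_l-d_l\}]$, and genuine quantum CMs satisfy $\varGamma+i\sigma\geq 0$. A symplectic $S$ acts on a CM by $\varGamma\mapsto S\varGamma S^T$. *)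

theory Defs
  imports Complex_Main "HOL-Library.Extended_Real" "Jordan_Normal_Form.Matrix" "Jordan_Normal_Form.Conjugate"
begin

text \<open>Symplectic form sigma for m modes: direct sum of m copies of [[0,1],[-1,0]] (size 2m).\<close>
definition sympl_form :: "nat \<Rightarrow> real mat" where
  "sympl_form m = mat (2*m) (2*m) (\<lambda>(i,j).
      if even i \<and> j = i + 1 then 1 else if odd i \<and> j + 1 = i then -1 else 0)"

definition symplectic :: "nat \<Rightarrow> real mat \<Rightarrow> bool" where
  "symplectic m S \<longleftrightarrow> S \<in> carrier_mat (2*m) (2*m) \<and>
     S * sympl_form m * transpose_mat S = sympl_form m"

definition cpsd :: "nat \<Rightarrow> complex mat \<Rightarrow> bool" where
  "cpsd k M \<longleftrightarrow> M \<in> carrier_mat k k \<and>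
     (\<forall>v \<in> carrier_vec k. Im (conjugate v \<bullet> (M *\<^sub>v v)) = 0 \<and>
                          Re (conjugate v \<bullet> (M *\<^sub>v v)) \<ge> 0)"

definition cov_mat :: "nat \<Rightarrow> real mat \<Rightarrow> bool" where
  "cov_mat n G \<longleftrightarrow> G \<in> carrier_mat (2*n) (2*n) \<and> transpose_mat G = G \<and>
     cpsd (2*n) (map_mat complex_of_real G + smult_mat \<i> (map_mat complex_of_real (sympl_form n)))"

text \<open>The matrix (1/sqrt(1+a^2)) [[1, a 1],[-a 1, 1]] (blocks of size 2n),
  with a = +-infinity understood as the limit [[0, +-1],[-+1, 0]].\<close>
definition mixA :: "nat \<Rightarrow> ereal \<Rightarrow> real mat" where
  "mixA n a = (case a of
      ereal x \<Rightarrow> smult_mat (1 / sqrt (1 + x^2))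
                  (four_block_mat (1\<^sub>m (2*n)) (smult_mat x (1\<^sub>m (2*n)))
                                  (smult_mat (-x) (1\<^sub>m (2*n))) (1\<^sub>m (2*n)))
    | PInfty \<Rightarrow> four_block_mat (0\<^sub>m (2*n) (2*n)) (1\<^sub>m (2*n)) (smult_mat (-1) (1\<^sub>m (2*n))) (0\<^sub>m (2*n) (2*n))
    | MInfty \<Rightarrow> four_block_mat (0\<^sub>m (2*n) (2*n)) (smult_mat (-1) (1\<^sub>m (2*n))) (1\<^sub>m (2*n)) (0\<^sub>m (2*n) (2*n)))"

text \<open>The matrix (1/sqrt(1+g^2)) [[1, -g 1],[g 1, 1]], with g = +-infinity as the limit.\<close>
definition mixB :: "nat \<Rightarrow> ereal \<Rightarrow> real mat" where
  "mixB n g = (case g of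
      ereal x \<Rightarrow> smult_mat (1 / sqrt (1 + x^2))
                  (four_block_mat (1\<^sub>m (2*n)) (smult_mat (-x) (1\<^sub>m (2*n)))
                                  (smult_mat x (1\<^sub>m (2*n))) (1\<^sub>m (2*n)))
    | PInfty \<Rightarrow> four_block_mat (0\<^sub>m (2*n) (2*n)) (smult_mat (-1) (1\<^sub>m (2*n))) (1\<^sub>m (2*n)) (0\<^sub>m (2*n) (2*n))
    | MInfty \<Rightarrow> four_block_mat (0\<^sub>m (2*n) (2*n)) (1\<^sub>m (2*n)) (smult_mat (-1) (1\<^sub>m (2*n))) (0\<^sub>m (2*n) (2*n)))"

end

theory Submission
  imports Defs "Jordan_Normal_Form.Determinant"
begin


lemma sum_split2: "sum f {0..<N+N} = sum f {0..<N} + sum (\<lambda>k. f (k+N)) {0..<(N::nat)}"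
proof -
  have "sum f {0..<N+N} = sum f {0..<N} + sum f {N..<N+N}"
    by (simp add: sum.atLeastLessThan_concat)
  also have "sum f {N..<N+N} = sum (\<lambda>k. f (k+N)) {0..<N}"
    using sum.shift_bounds_nat_ivl[of f 0 N N] by simp
  finally show ?thesis .
qed

lemma sf_block: "sympl_form (2*n) = four_block_mat (sympl_form n) (0\<^sub>m (2*n) (2*n)) (0\<^sub>m (2*n) (2*n)) (sympl_form n)"
  apply (rule eq_matI)
  apply (auto simp: sympl_form_def)
  apply presburger+
  done

lemma sf_idx: "i < 2*m \<Longrightarrow> j < 2*m \<Longrightarrow> sympl_form m $$ (i,j) = (if even i \<and> j = i + 1 then 1 else if odd i \<and> j + 1 = i then -1 else 0)"
  by (simp add: sympl_form_def)

lemma sf_carrier[simp]: "sympl_form m \<in> carrier_mat (2*m) (2*m)"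
  by (simp add: sympl_form_def)

lemma sf_sq: "sympl_form m * sympl_form m = - 1\<^sub>m (2*m)"
proof (rule eq_matI)
  fix i j assume i: "i < dim_row (- 1\<^sub>m (2*m))" and j: "j < dim_col (- 1\<^sub>m (2*m))"
  hence i: "i < 2*m" and j: "j < 2*m" by auto
  define p where "p = (if even i then i+1 else i - 1)"
  have p: "p < 2*m" using i unfolding p_def by presburger
  have "(sympl_form m * sympl_form m) $$ (i,j) = (\<Sum>k\<in>{0..<2*m}. sympl_form m $$ (i,k) * sympl_form m $$ (k,j))"
    using i j by (simp add: scalar_prod_def sympl_form_def)
  also have "\<dots> = (\<Sum>k\<in>{0..<2*m}. if k = p then sympl_form m $$ (i,p) * sympl_form m $$ (p,j) else 0)"
    apply (rule sum.cong, simp)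
    using i j unfolding p_def by (auto simp: sf_idx)
  also have "\<dots> = sympl_form m $$ (i,p) * sympl_form m $$ (p,j)" using p by simp
  also have "\<dots> = (- 1\<^sub>m (2*m)) $$ (i,j)"
    using i j p unfolding p_def by (auto simp: sf_idx)
  finally show "(sympl_form m * sympl_form m) $$ (i,j) = (- 1\<^sub>m (2*m)) $$ (i,j)" .
qed (auto simp: sympl_form_def)



lemma sf_dim[simp]: "dim_row (sympl_form m) = 2*m" "dim_col (sympl_form m) = 2*m"
  by (simp_all add: sympl_form_def)

lemma sympl_inj:
  assumes "symplectic m S" and v: "v \<in> carrier_vec (2*m)" and Sv: "S *\<^sub>v v = 0\<^sub>v (2*m)"
  shows "v = 0\<^sub>v (2*m)"
proof -
  let ?J = "sympl_form m"
  have S: "S \<in> carrier_mat (2*m) (2*m)" and SJ: "S * ?J * transpose_mat S = ?J"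
    using assms(1) unfolding symplectic_def by auto
  have J: "?J \<in> carrier_mat (2*m) (2*m)" by simp
  have St: "transpose_mat S \<in> carrier_mat (2*m) (2*m)" using S by simp
  define T where "T = - (?J * transpose_mat S * ?J)"
  have T: "T \<in> carrier_mat (2*m) (2*m)" unfolding T_def by (rule uminus_carrier_mat[OF mult_carrier_mat[OF mult_carrier_mat[OF J St] J]])
  have e1: "S * T = - (S * (?J * transpose_mat S * ?J))" unfolding T_def 
  proof (rule uminus_mult_right_mat)
    show "dim_col S = dim_row (?J * transpose_mat S * ?J)" using S by simp
  qed
  have e2a: "(S * ?J * transpose_mat S) * ?J = (S * ?J) * (transpose_mat S * ?J)"
    by (rule assoc_mult_mat[OF mult_carrier_mat[OF S J] St J])
  have e2b: "(S * ?J) * (transpose_mat S * ?J) = S * (?J * (transpose_mat S * ?J))"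
    by (rule assoc_mult_mat[OF S J mult_carrier_mat[OF St J]])
  have e2c: "?J * transpose_mat S * ?J = ?J * (transpose_mat S * ?J)"
    by (rule assoc_mult_mat[OF J St J])
  have e2: "S * (?J * transpose_mat S * ?J) = (S * ?J * transpose_mat S) * ?J"
    unfolding e2a e2b e2c ..
  have "S * T = 1\<^sub>m (2*m)" unfolding e1 e2 SJ sf_sq by simp
  hence TS: "T * S = 1\<^sub>m (2*m)" using mat_mult_left_right_inverse[OF S T] by blast
  have "v = (T * S) *\<^sub>v v" unfolding TS using v by simp
  also have "\<dots> = T *\<^sub>v (S *\<^sub>v v)" using assoc_mult_mat_vec[OF T S v] .
  also have "\<dots> = 0\<^sub>v (2*m)" unfolding Sv using T by (intro eq_vecI) auto
  finally show ?thesis .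
qed

lemma sympl_inj':
  assumes "symplectic m S" and x: "\<forall>r<2*m. (\<Sum>u\<in>{0..<2*m}. S $$ (r,u) * x u) = 0"
  shows "\<forall>u<2*m. x u = 0"
proof -
  have S: "S \<in> carrier_mat (2*m) (2*m)" using assms(1) unfolding symplectic_def by auto
  let ?v = "vec (2*m) x"
  have "S *\<^sub>v ?v = 0\<^sub>v (2*m)"
    apply (rule eq_vecI) using S x by (auto simp: scalar_prod_def)
  hence "?v = 0\<^sub>v (2*m)" using sympl_inj[OF assms(1)] by simp
  thus ?thesis by (metis index_vec index_zero_vec(1))
qed




lemma sf_abs: "u < 2*m \<Longrightarrow> w < 2*m \<Longrightarrow> \<bar>sympl_form m $$ (u,w)\<bar> \<le> 1"
  by (simp add: sf_idx)

lemma sf_anti: "u < 2*m \<Longrightarrow> w < 2*m \<Longrightarrow> sympl_form m $$ (w,u) = - sympl_form m $$ (u,w)"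
  by (auto simp: sf_idx)

lemma term_bound:
  fixes a b z :: complex
  assumes "cmod z \<le> 3"
  shows "Re (cnj a * z * b) \<ge> - 3 * ((cmod a)^2 + (cmod b)^2) / 2"
proof -
  have "Re (cnj a * z * b) \<ge> - cmod (cnj a * z * b)" using abs_Re_le_cmod[of "cnj a * z * b"] by linarith
  moreover have "cmod (cnj a * z * b) = cmod a * cmod z * cmod b" by (simp add: norm_mult)
  moreover have "cmod a * cmod z * cmod b \<le> cmod a * 3 * cmod b"
    using assms by (simp add: mult_mono mult_right_mono)
  moreover have "cmod a * cmod b \<le> ((cmod a)^2 + (cmod b)^2) / 2"
    using sum_squares_bound[of "cmod a" "cmod b"] by (simp add: power2_eq_square)
  ultimately show ?thesis by linarith
qed

lemma cov_mat_tE: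
  fixes E :: "real mat" and t :: real
  assumes E: "E \<in> carrier_mat (2*n) (2*n)" and Et: "transpose_mat E = E"
    and Eb: "\<forall>u<2*n. \<forall>w<2*n. \<bar>E$$(u,w)\<bar> \<le> 2" and t: "t \<ge> 6*n"
  shows "cov_mat n (t \<cdot>\<^sub>m 1\<^sub>m (2*n) + E)"
proof -
  let ?G = "t \<cdot>\<^sub>m 1\<^sub>m (2*n) + E"
  let ?s = "sympl_form n"
  have G: "?G \<in> carrier_mat (2*n) (2*n)" using E by auto
  have Esym: "E$$(w,u) = E$$(u,w)" if "u<2*n" "w<2*n" for u w
    using that E Et by (metis carrier_matD(1) carrier_matD(2) index_transpose_mat(1))
  have Gt: "transpose_mat ?G = ?G"
    by (rule eq_matI) (use E Esym in auto)
  define M where "M = map_mat complex_of_real ?G + \<i> \<cdot>\<^sub>m map_mat complex_of_real ?s"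
  have M: "M \<in> carrier_mat (2*n) (2*n)" unfolding M_def using E by auto
  define R where "R u w = complex_of_real (E$$(u,w)) + \<i> * complex_of_real (?s $$ (u,w))" for u w
  have Midx: "M$$(u,w) = complex_of_real (if u = w then t else 0) + R u w" if "u<2*n" "w<2*n" for u w
    unfolding M_def R_def using that E by auto
  have Rb: "cmod (R u w) \<le> 3" if "u<2*n" "w<2*n" for u w
  proof -
    have "cmod (R u w) \<le> cmod (complex_of_real (E$$(u,w))) + cmod (\<i> * complex_of_real (?s $$ (u,w)))"
      unfolding R_def by (rule norm_triangle_ineq)
    also have "\<dots> = \<bar>E$$(u,w)\<bar> + \<bar>?s $$ (u,w)\<bar>" by (simp add: norm_mult)
    also have "\<dots> \<le> 3" using Eb sf_abs[OF that] that by fastforce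
    finally show ?thesis .
  qed
  have Rh: "cnj (R u w) = R w u" if "u<2*n" "w<2*n" for u w
    unfolding R_def using Esym[OF that] sf_anti[OF that] by (simp add: complex_eq_iff)
  have Mh: "cnj (M$$(u,w)) = M$$(w,u)" if "u<2*n" "w<2*n" for u w
    using Midx[OF that] Midx[OF that(2,1)] Rh[OF that] by auto
  have "cpsd (2*n) (map_mat complex_of_real ?G + \<i> \<cdot>\<^sub>m map_mat complex_of_real ?s)"
    unfolding cpsd_def M_def[symmetric]
  proof (rule conjI[OF M], rule ballI)
    fix v :: "complex vec" assume v: "v \<in> carrier_vec (2*n)"
    define q where "q u w = cnj (v$u) * M$$(u,w) * v$w" for u w
    define Q where "Q = conjugate v \<bullet> (M *\<^sub>v v)"
    have QS: "Q = (\<Sum>u\<in>{0..<2*n}. \<Sum>w\<in>{0..<2*n}. q u w)"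
      unfolding Q_def scalar_prod_def q_def using v M
      by (auto simp: sum_distrib_left mult.assoc scalar_prod_def intro!: sum.cong)
    have "cnj Q = (\<Sum>u\<in>{0..<2*n}. \<Sum>w\<in>{0..<2*n}. cnj (q u w))"
      unfolding QS by (simp add: cnj_sum)
    also have "\<dots> = (\<Sum>u\<in>{0..<2*n}. \<Sum>w\<in>{0..<2*n}. q w u)"
      by (intro sum.cong refl) (auto simp: q_def Mh mult.commute mult.left_commute)
    also have "\<dots> = Q" unfolding QS by (rule sum.swap)
    finally have cQ: "cnj Q = Q" .
    have "Im (cnj Q) = Im Q" by (subst cQ) (rule refl)
    hence ImQ: "Im Q = 0" by simp
    let ?n2 = "\<lambda>u. (cmod (v$u))^2"
    have lb: "Re (q u w) \<ge> (if u = w then t * ?n2 u else 0) - 3 * (?n2 u + ?n2 w) / 2"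
      if "u<2*n" "w<2*n" for u w
    proof -
      have "q u w = cnj (v$u) * complex_of_real (if u = w then t else 0) * v$w + cnj (v$u) * R u w * v$w"
        unfolding q_def Midx[OF that] by (simp add: algebra_simps)
      hence "Re (q u w) = Re (cnj (v$u) * complex_of_real (if u = w then t else 0) * v$w) + Re (cnj (v$u) * R u w * v$w)"
        by (simp only: plus_complex.sel)
      moreover have "Re (cnj (v$u) * complex_of_real (if u = w then t else 0) * v$w) = (if u = w then t * ?n2 u else 0)"
        by (auto simp: cmod_power2) (simp add: algebra_simps power2_eq_square)
      moreover have "Re (cnj (v$u) * R u w * v$w) \<ge> - 3 * (?n2 u + ?n2 w) / 2"
        using term_bound[OF Rb[OF that]] .
      ultimately show ?thesis by linarith
    qed
    have "Re Q = (\<Sum>u\<in>{0..<2*n}. \<Sum>w\<in>{0..<2*n}. Re (q u w))" unfolding QS by (simp add: Re_sum)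
    also have "\<dots> \<ge> (\<Sum>u\<in>{0..<2*n}. \<Sum>w\<in>{0..<2*n}. (if u = w then t * ?n2 u else 0) - 3 * (?n2 u + ?n2 w) / 2)"
      by (intro sum_mono lb) auto
    also have "(\<Sum>u\<in>{0..<2*n}. \<Sum>w\<in>{0..<2*n}. (if u = w then t * ?n2 u else 0) - 3 * (?n2 u + ?n2 w) / 2)
        = (\<Sum>u\<in>{0..<2*n}. t * ?n2 u) - (3/2) * (\<Sum>u\<in>{0..<2*n}. \<Sum>w\<in>{0..<2*n}. ?n2 u + ?n2 w)"
      by (simp add: sum_subtractf sum_distrib_left sum_divide_distrib)
    also have "(\<Sum>u\<in>{0..<2*n}. \<Sum>w\<in>{0..<2*n}. ?n2 u + ?n2 w) = 2 * (2*n) * (\<Sum>u\<in>{0..<2*n}. ?n2 u)"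
      by (simp add: sum.distrib sum_distrib_left[symmetric] sum.swap[of "\<lambda>u w. ?n2 w"])
    finally have h1: "Re Q \<ge> (\<Sum>u\<in>{0..<2*n}. t * ?n2 u) - (3/2) * (2 * (2*n) * (\<Sum>u\<in>{0..<2*n}. ?n2 u))" .
    have h2: "(\<Sum>u\<in>{0..<2*n}. t * ?n2 u) = t * (\<Sum>u\<in>{0..<2*n}. ?n2 u)" by (simp add: sum_distrib_left)
    have "(t - 6*n) * (\<Sum>u\<in>{0..<2*n}. ?n2 u) \<ge> 0"
      using t by (intro mult_nonneg_nonneg sum_nonneg) auto
    hence "Re Q \<ge> 0" using h1 unfolding h2 by (simp add: algebra_simps)
    thus "Im (conjugate v \<bullet> (M *\<^sub>v v)) = 0 \<and> 0 \<le> Re (conjugate v \<bullet> (M *\<^sub>v v))"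
      using ImQ unfolding Q_def by linarith
  qed
  thus ?thesis unfolding cov_mat_def using G Gt by blast
qed




lemma blk_entry:
  fixes S G :: "real mat"
  assumes S: "S \<in> carrier_mat (N+N) (N+N)" and G: "G \<in> carrier_mat N N" and i: "i < N+N" and j: "j < N+N"
  shows "(S * four_block_mat G (0\<^sub>m N N) (0\<^sub>m N N) G * transpose_mat S) $$ (i,j) =
    (\<Sum>w\<in>{0..<N}. \<Sum>u\<in>{0..<N}. G$$(u,w) * (S$$(i,u) * S$$(j,w) + S$$(i,u+N) * S$$(j,w+N)))"
proof -
  let ?D = "four_block_mat G (0\<^sub>m N N) (0\<^sub>m N N) G"
  have D: "?D \<in> carrier_mat (N+N) (N+N)" using G by auto
  have SD: "(S * ?D) $$ (i,w) = (if w < N then (\<Sum>u\<in>{0..<N}. S$$(i,u) * G$$(u,w))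
       else (\<Sum>u\<in>{0..<N}. S$$(i,u+N) * G$$(u,w-N)))" if w: "w < N+N" for w
  proof -
    have "(S * ?D) $$ (i,w) = (\<Sum>u\<in>{0..<N+N}. S$$(i,u) * ?D$$(u,w))"
      using S D G i w by (simp add: scalar_prod_def carrier_matD)
    also have "\<dots> = (\<Sum>u\<in>{0..<N}. S$$(i,u) * ?D$$(u,w)) + (\<Sum>u\<in>{0..<N}. S$$(i,u+N) * ?D$$(u+N,w))"
      by (rule sum_split2)
    also have "\<dots> = (if w < N then (\<Sum>u\<in>{0..<N}. S$$(i,u) * G$$(u,w))
       else (\<Sum>u\<in>{0..<N}. S$$(i,u+N) * G$$(u,w-N)))"
      using G w by (auto intro!: sum.cong)
    finally show ?thesis .
  qed
  have "(S * ?D * transpose_mat S) $$ (i,j) = (\<Sum>w\<in>{0..<N+N}. (S * ?D) $$ (i,w) * S$$(j,w))"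
    using S D G i j by (simp add: scalar_prod_def carrier_matD del: assoc_mult_mat)
  also have "\<dots> = (\<Sum>w\<in>{0..<N}. (S * ?D) $$ (i,w) * S$$(j,w)) + (\<Sum>w\<in>{0..<N}. (S * ?D) $$ (i,w+N) * S$$(j,w+N))"
    by (rule sum_split2)
  also have "\<dots> = (\<Sum>w\<in>{0..<N}. (\<Sum>u\<in>{0..<N}. S$$(i,u) * G$$(u,w)) * S$$(j,w)) + (\<Sum>w\<in>{0..<N}. (\<Sum>u\<in>{0..<N}. S$$(i,u+N) * G$$(u,w)) * S$$(j,w+N))"
    using SD by simp
  also have "\<dots> = (\<Sum>w\<in>{0..<N}. \<Sum>u\<in>{0..<N}. G$$(u,w) * (S$$(i,u) * S$$(j,w) + S$$(i,u+N) * S$$(j,w+N)))"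
    by (simp add: distrib_left sum.distrib sum_distrib_left sum_distrib_right mult_ac)
  finally show ?thesis .
qed

lemma dsum_diag:
  fixes K :: "nat \<Rightarrow> nat \<Rightarrow> real"
  shows "(\<Sum>w\<in>{0..<N}. \<Sum>u\<in>{0..<N}. (if u = w then t else 0) * K u w) = t * (\<Sum>u\<in>{0..<N}. K u u)"
proof -
  have "(\<Sum>u\<in>{0..<N}. (if u = w then t else 0) * K u w) = t * K w w" if "w < N" for w
  proof -
    have "(\<Sum>u\<in>{0..<N}. (if u = w then t else 0) * K u w) = (\<Sum>u\<in>{0..<N}. if u = w then t * K w w else 0)"
      by (rule sum.cong) auto
    also have "\<dots> = t * K w w" using that by simp
    finally show ?thesis .
  qed
  hence "(\<Sum>w\<in>{0..<N}. \<Sum>u\<in>{0..<N}. (if u = w then t else 0) * K u w) = (\<Sum>w\<in>{0..<N}. t * K w w)"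
    by (intro sum.cong) auto
  thus ?thesis by (simp add: sum_distrib_left)
qed

lemma dsum_one:
  fixes K :: "nat \<Rightarrow> nat \<Rightarrow> real"
  assumes "k < N" "l < N"
  shows "(\<Sum>w\<in>{0..<N}. \<Sum>u\<in>{0..<N}. (if u = k \<and> w = l then 1 else 0) * K u w) = K k l"
proof -
  have "(\<Sum>u\<in>{0..<N}. (if u = k \<and> w = l then 1 else 0) * K u w) = (if w = l then K k w else 0)" for w
  proof -
    have "(\<Sum>u\<in>{0..<N}. (if u = k \<and> w = l then 1 else 0) * K u w) = (\<Sum>u\<in>{0..<N}. if u = k then (if w = l then K k w else 0) else 0)"
      by (rule sum.cong) auto
    also have "\<dots> = (if w = l then K k w else 0)" using assms by simp
    finally show ?thesis .
  qed
  hence "(\<Sum>w\<in>{0..<N}. \<Sum>u\<in>{0..<N}. (if u = k \<and> w = l then 1 else 0) * K u w) = (\<Sum>w\<in>{0..<N}. if w = l then K k w else 0)"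
    by simp
  also have "\<dots> = K k l" using assms by simp
  finally show ?thesis .
qed

lemma dsum:
  fixes K :: "nat \<Rightarrow> nat \<Rightarrow> real"
  assumes "k < N" "l < N"
  shows "(\<Sum>w\<in>{0..<N}. \<Sum>u\<in>{0..<N}. ((if u = w then t else 0) + c * ((if u = k \<and> w = l then 1 else 0) + (if u = l \<and> w = k then 1 else 0))) * K u w)
     = t * (\<Sum>u\<in>{0..<N}. K u u) + c * (K k l + K l k)"
proof -
  have "(\<Sum>w\<in>{0..<N}. \<Sum>u\<in>{0..<N}. ((if u = w then t else 0) + c * ((if u = k \<and> w = l then 1 else 0) + (if u = l \<and> w = k then 1 else 0))) * K u w)
    = (\<Sum>w\<in>{0..<N}. \<Sum>u\<in>{0..<N}. (if u = w then t else 0) * K u w)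
      + c * (\<Sum>w\<in>{0..<N}. \<Sum>u\<in>{0..<N}. (if u = k \<and> w = l then 1 else 0) * K u w)
      + c * (\<Sum>w\<in>{0..<N}. \<Sum>u\<in>{0..<N}. (if u = l \<and> w = k then 1 else 0) * K u w)"
    by (simp only: sum_distrib_left sum.distrib[symmetric] distrib_right distrib_left mult.assoc add.assoc)
  thus ?thesis using dsum_diag[where N=N and t=t and K=K] dsum_one[OF assms, where K=K] dsum_one[OF assms(2,1), where K=K] by (simp add: distrib_left)
qed




lemma perp2:
  fixes x y p q r s :: real
  assumes "x * r + y * s = 0" "p * r + q * s = 0" "r \<noteq> 0 \<or> s \<noteq> 0"
  shows "q * x = p * y"
proof (cases "r = 0")
  case True
  then have "s \<noteq> 0" using assms(3) by simp
  then have "y = 0" "q = 0" using assms(1,2) True by auto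
  then show ?thesis by simp
next
  case False
  have "x = - y * s / r" "p = - q * s / r" using assms(1,2) False by (auto simp: field_simps)
  then show ?thesis by (simp add: field_simps)
qed

lemma par_trans:
  fixes x y p q p' q' :: real
  assumes "q * p' = p * q'" "q' * x = p' * y" "p' \<noteq> 0 \<or> q' \<noteq> 0"
  shows "q * x = p * y"
proof (cases "p' = 0")
  case True
  then have "q' \<noteq> 0" using assms(3) by simp
  then have "x = 0" "p = 0" using assms(1,2) True by auto
  then show ?thesis by simp
next
  case False
  have "q = p * q' / p'" "y = q' * x / p'" using assms(1,2) False by (auto simp: field_simps)
  then show ?thesis by (simp add: field_simps)
qed

lemma par_perp:
  fixes c d p q p' q' :: real
  assumes "q * p' = p * q'" "p' * c + q' * d = 0" "p' \<noteq> 0 \<or> q' \<noteq> 0"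
  shows "p * c + q * d = 0"
proof (cases "p' = 0")
  case True
  then have "q' \<noteq> 0" using assms(3) by simp
  then have "d = 0" "p = 0" using assms(1,2) True by auto
  then show ?thesis by simp
next
  case False
  have "p' * (p * c + q * d) = p * (p' * c + q' * d) + d * (q * p' - p * q')" by (simp add: algebra_simps)
  also have "\<dots> = 0" using assms(1,2) by simp
  finally show ?thesis using False by simp
qed

lemma sum_two:
  fixes f g :: "nat \<Rightarrow> real"
  assumes "k < N" "l < N" "k \<noteq> l"
  shows "(\<Sum>m\<in>{0..<N}. (if m = k then \<alpha> else if m = l then \<alpha>' else 0) * f m + (if m = k then \<beta> else if m = l then \<beta>' else 0) * g m)
    = \<alpha> * f k + \<beta> * g k + \<alpha>' * f l + \<beta>' * g l"
proof -
  have "(\<Sum>m\<in>{0..<N}. (if m = k then \<alpha> else if m = l then \<alpha>' else 0) * f m + (if m = k then \<beta> else if m = l then \<beta>' else 0) * g m)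
    = (\<Sum>m\<in>{0..<N}. (if m = k then \<alpha> * f k + \<beta> * g k else 0) + (if m = l then \<alpha>' * f l + \<beta>' * g l else 0))"
    by (rule sum.cong) (use assms in auto)
  also have "\<dots> = \<alpha> * f k + \<beta> * g k + \<alpha>' * f l + \<beta>' * g l"
    using assms by (simp add: sum.distrib)
  finally show ?thesis .
qed

lemma sum_one:
  fixes f g :: "nat \<Rightarrow> real"
  assumes "k < N"
  shows "(\<Sum>m\<in>{0..<N}. (if m = k then \<alpha> else 0) * f m + (if m = k then \<beta> else 0) * g m)
    = \<alpha> * f k + \<beta> * g k"
proof -
  have "(\<Sum>m\<in>{0..<N}. (if m = k then \<alpha> else 0) * f m + (if m = k then \<beta> else 0) * g m)
    = (\<Sum>m\<in>{0..<N}. (if m = k then \<alpha> * f k + \<beta> * g k else 0))"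
    by (rule sum.cong) (use assms in auto)
  also have "\<dots> = \<alpha> * f k + \<beta> * g k"
    using assms by simp
  finally show ?thesis .
qed


locale coreloc =
  fixes N :: nat and a b c d :: "nat \<Rightarrow> nat \<Rightarrow> real"
  assumes H1: "\<And>k l i j. k<N \<Longrightarrow> l<N \<Longrightarrow> i<N \<Longrightarrow> j<N \<Longrightarrow>
      a k i * c l j + a l i * c k j + b k i * d l j + b l i * d k j = 0"
  and indep: "\<And>x y. (\<forall>i<N. (\<Sum>m\<in>{0..<N}. x m * a m i + y m * b m i) = 0) \<Longrightarrow>
      (\<forall>j<N. (\<Sum>m\<in>{0..<N}. x m * c m j + y m * d m j) = 0) \<Longrightarrow> (\<forall>m<N. x m = 0 \<and> y m = 0)"
  and Pnz: "\<exists>k<N. \<exists>i<N. a k i \<noteq> 0 \<or> b k i \<noteq> 0"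
  and Qnz: "\<exists>k<N. \<exists>j<N. c k j \<noteq> 0 \<or> d k j \<noteq> 0"
begin

lemma H1d: "k<N \<Longrightarrow> i<N \<Longrightarrow> j<N \<Longrightarrow> a k i * c k j + b k i * d k j = 0"
  using H1[of k k i j] by simp

lemma indep1:
  assumes k: "k < N" and A: "\<forall>i<N. \<alpha> * a k i + \<beta> * b k i = 0" and C: "\<forall>j<N. \<alpha> * c k j + \<beta> * d k j = 0"
  shows "\<alpha> = 0 \<and> \<beta> = 0"
proof -
  let ?x = "\<lambda>m. if m = k then \<alpha> else 0" and ?y = "\<lambda>m. if m = k then \<beta> else 0"
  have "\<forall>m<N. ?x m = 0 \<and> ?y m = 0"
  proof (rule indep)
    show "\<forall>i<N. (\<Sum>m\<in>{0..<N}. ?x m * a m i + ?y m * b m i) = 0"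
      using A sum_one[OF k, of \<alpha> "\<lambda>m. a m _" \<beta>] by simp
    show "\<forall>j<N. (\<Sum>m\<in>{0..<N}. ?x m * c m j + ?y m * d m j) = 0"
      using C sum_one[OF k, of \<alpha> "\<lambda>m. c m _" \<beta>] by simp
  qed
  thus ?thesis using k by auto
qed

lemma P_all: "k < N \<Longrightarrow> \<exists>i<N. a k i \<noteq> 0 \<or> b k i \<noteq> 0"
proof (rule ccontr)
  assume k: "k < N" and "\<not> (\<exists>i<N. a k i \<noteq> 0 \<or> b k i \<noteq> 0)"
  hence z: "\<forall>i<N. a k i = 0 \<and> b k i = 0" by auto
  have "a l i = 0 \<and> b l i = 0" if l: "l < N" and i: "i < N" for l i
  proof (rule indep1[OF k])
    show "\<forall>i'<N. a l i * a k i' + b l i * b k i' = 0" using z by simp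
    show "\<forall>j<N. a l i * c k j + b l i * d k j = 0"
      using H1[OF k l i] z i by (auto simp: mult.commute)
  qed
  thus False using Pnz by auto
qed

lemma Q_all: "k < N \<Longrightarrow> \<exists>j<N. c k j \<noteq> 0 \<or> d k j \<noteq> 0"
proof (rule ccontr)
  assume k: "k < N" and "\<not> (\<exists>j<N. c k j \<noteq> 0 \<or> d k j \<noteq> 0)"
  hence z: "\<forall>j<N. c k j = 0 \<and> d k j = 0" by auto
  have "c l j = 0 \<and> d l j = 0" if l: "l < N" and j: "j < N" for l j
  proof (rule indep1[OF k])
    show "\<forall>i<N. c l j * a k i + d l j * b k i = 0"
      using H1[OF k l _ j] z j by (auto simp: mult.commute)
    show "\<forall>j'<N. c l j * c k j' + d l j * d k j' = 0" using z by simp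
  qed
  thus False using Qnz by auto
qed

definition ik where "ik k = (SOME i. i < N \<and> (a k i \<noteq> 0 \<or> b k i \<noteq> 0))"
definition pk where "pk k = a k (ik k)"
definition qk where "qk k = b k (ik k)"

lemma ik: "k < N \<Longrightarrow> ik k < N \<and> (pk k \<noteq> 0 \<or> qk k \<noteq> 0)"
  unfolding pk_def qk_def ik_def using P_all by (metis (mono_tags, lifting) someI_ex)

lemma dirk:
  assumes k: "k < N"
  shows "\<forall>i<N. qk k * a k i = pk k * b k i" and "\<forall>j<N. pk k * c k j + qk k * d k j = 0"
proof -
  show perp: "\<forall>j<N. pk k * c k j + qk k * d k j = 0"
    using H1d[OF k] ik[OF k] unfolding pk_def qk_def by auto
  obtain j0 where j0: "j0 < N" "c k j0 \<noteq> 0 \<or> d k j0 \<noteq> 0" using Q_all[OF k] by auto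
  show "\<forall>i<N. qk k * a k i = pk k * b k i"
  proof (intro allI impI)
    fix i assume i: "i < N"
    show "qk k * a k i = pk k * b k i"
      by (rule perp2[OF H1d[OF k i j0(1)] perp[rule_format, OF j0(1)] j0(2)])
  qed
qed

lemma cross:
  assumes k: "k < N" and l: "l < N" and kl: "k \<noteq> l"
  shows "qk k * pk l = pk k * qk l"
proof (rule ccontr)
  assume nd: "qk k * pk l \<noteq> pk k * qk l"
  define p where "p = pk k"
  define q where "q = qk k"
  define p' where "p' = pk l"
  define q' where "q' = qk l"
  have pq: "p \<noteq> 0 \<or> q \<noteq> 0" using ik[OF k] unfolding p_def q_def by auto
  have pq': "p' \<noteq> 0 \<or> q' \<noteq> 0" using ik[OF l] unfolding p'_def q'_def by auto
  define \<rho> where "\<rho> = p^2 + q^2"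
  define \<rho>' where "\<rho>' = p'^2 + q'^2"
  have \<rho>: "\<rho> > 0" unfolding \<rho>_def using pq by (auto simp: sum_power2_gt_zero_iff)
  have \<rho>': "\<rho>' > 0" unfolding \<rho>'_def using pq' by (auto simp: sum_power2_gt_zero_iff)
  define w where "w i = (p * a k i + q * b k i) / \<rho>" for i
  define z where "z j = (- q * c k j + p * d k j) / \<rho>" for j
  define w' where "w' i = (p' * a l i + q' * b l i) / \<rho>'" for i
  define z' where "z' j = (- q' * c l j + p' * d l j) / \<rho>'" for j
  have par: "q * a k i = p * b k i" if "i < N" for i using dirk(1)[OF k] that unfolding p_def q_def by auto
  have perp: "p * c k j + q * d k j = 0" if "j < N" for j using dirk(2)[OF k] that unfolding p_def q_def by auto
  have par': "q' * a l i = p' * b l i" if "i < N" for i using dirk(1)[OF l] that unfolding p'_def q'_def by auto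
  have perp': "p' * c l j + q' * d l j = 0" if "j < N" for j using dirk(2)[OF l] that unfolding p'_def q'_def by auto
  have aw: "a k i = p * w i \<and> b k i = q * w i" if "i < N" for i
  proof -
    have "\<rho> * a k i = p * (p * a k i + q * b k i)" "\<rho> * b k i = q * (p * a k i + q * b k i)"
      using par[OF that] unfolding \<rho>_def by (simp_all add: algebra_simps power2_eq_square)
    thus ?thesis using \<rho> unfolding w_def by (auto simp: field_simps)
  qed
  have cz: "c k j = - q * z j \<and> d k j = p * z j" if "j < N" for j
  proof -
    have h1: "\<rho> * c k j - (- q * (- q * c k j + p * d k j)) = p * (p * c k j + q * d k j)"
      unfolding \<rho>_def by (simp add: algebra_simps power2_eq_square)
    have h2: "\<rho> * d k j - p * (- q * c k j + p * d k j) = q * (p * c k j + q * d k j)"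
      unfolding \<rho>_def by (simp add: algebra_simps power2_eq_square)
    have "\<rho> * c k j = - q * (- q * c k j + p * d k j)" "\<rho> * d k j = p * (- q * c k j + p * d k j)"
      using h1 h2 perp[OF that] by simp_all
    thus ?thesis using \<rho> unfolding z_def by (auto simp: field_simps)
  qed
  have aw': "a l i = p' * w' i \<and> b l i = q' * w' i" if "i < N" for i
  proof -
    have "\<rho>' * a l i = p' * (p' * a l i + q' * b l i)" "\<rho>' * b l i = q' * (p' * a l i + q' * b l i)"
      using par'[OF that] unfolding \<rho>'_def by (simp_all add: algebra_simps power2_eq_square)
    thus ?thesis using \<rho>' unfolding w'_def by (auto simp: field_simps)
  qed
  have cz': "c l j = - q' * z' j \<and> d l j = p' * z' j" if "j < N" for j
  proof -
    have h1: "\<rho>' * c l j - (- q' * (- q' * c l j + p' * d l j)) = p' * (p' * c l j + q' * d l j)"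
      unfolding \<rho>'_def by (simp add: algebra_simps power2_eq_square)
    have h2: "\<rho>' * d l j - p' * (- q' * c l j + p' * d l j) = q' * (p' * c l j + q' * d l j)"
      unfolding \<rho>'_def by (simp add: algebra_simps power2_eq_square)
    have "\<rho>' * c l j = - q' * (- q' * c l j + p' * d l j)" "\<rho>' * d l j = p' * (- q' * c l j + p' * d l j)"
      using h1 h2 perp'[OF that] by simp_all
    thus ?thesis using \<rho>' unfolding z'_def by (auto simp: field_simps)
  qed
  have wz: "w i * z' j = w' i * z j" if i: "i < N" and j: "j < N" for i j
  proof -
    have "0 = a k i * c l j + a l i * c k j + b k i * d l j + b l i * d k j" using H1[OF k l i j] by simp
    also have "\<dots> = (q * p' - p * q') * (w i * z' j - w' i * z j)"
      using aw[OF i] cz[OF j] aw'[OF i] cz'[OF j] by (simp add: algebra_simps)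
    finally show ?thesis using nd unfolding p_def q_def p'_def q'_def by simp
  qed
  define i0 where "i0 = ik k"
  have i0: "i0 < N" "w i0 = 1"
    using ik[OF k] \<rho> unfolding i0_def w_def p_def pk_def q_def qk_def \<rho>_def
    by (auto simp: power2_eq_square)
  obtain j0 where j0: "j0 < N" "c k j0 \<noteq> 0 \<or> d k j0 \<noteq> 0" using Q_all[OF k] by auto
  have zj0: "z j0 \<noteq> 0" using cz[OF j0(1)] j0(2) by auto
  define \<mu> where "\<mu> = z' j0 / z j0"
  have w'\<mu>: "w' i = \<mu> * w i" if "i < N" for i
    using wz[OF that j0(1)] zj0 unfolding \<mu>_def by (simp add: field_simps)
  have z'\<mu>: "z' j = \<mu> * z j" if "j < N" for j
    using wz[OF i0(1) that] w'\<mu>[OF i0(1)] i0(2) by simp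
  define x0 where "x0 = - \<mu> * (p * p' + q * q') / \<rho>"
  define y0 where "y0 = \<mu> * (p * q' - q * p') / \<rho>"
  have e1a: "x0 * p + y0 * q = (- \<mu> * (p * p' + q * q') * p + \<mu> * (p * q' - q * p') * q) / \<rho>"
    unfolding x0_def y0_def by (simp add: add_divide_distrib diff_divide_distrib)
  have e1b: "- \<mu> * (p * p' + q * q') * p + \<mu> * (p * q' - q * p') * q = - \<mu> * p' * \<rho>"
    unfolding \<rho>_def by (simp add: algebra_simps power2_eq_square)
  have e1: "x0 * p + y0 * q + \<mu> * p' = 0"
    unfolding e1a e1b using \<rho> by simp
  have e2a: "- x0 * q + y0 * p = (\<mu> * (p * p' + q * q') * q + \<mu> * (p * q' - q * p') * p) / \<rho>"
    unfolding x0_def y0_def by (simp add: add_divide_distrib diff_divide_distrib)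
  have e2b: "\<mu> * (p * p' + q * q') * q + \<mu> * (p * q' - q * p') * p = \<mu> * q' * \<rho>"
    unfolding \<rho>_def by (simp add: algebra_simps power2_eq_square)
  have e2: "- x0 * q + y0 * p - \<mu> * q' = 0"
    unfolding e2a e2b using \<rho> by simp
  let ?x = "\<lambda>m. if m = k then x0 else if m = l then 1 else 0"
  let ?y = "\<lambda>m. if m = k then y0 else if m = l then 0 else 0"
  have "\<forall>m<N. ?x m = 0 \<and> ?y m = 0"
  proof (rule indep)
    show "\<forall>i<N. (\<Sum>m\<in>{0..<N}. ?x m * a m i + ?y m * b m i) = 0"
    proof (intro allI impI)
      fix i assume i: "i < N"
      have "(\<Sum>m\<in>{0..<N}. ?x m * a m i + ?y m * b m i) = x0 * a k i + y0 * b k i + 1 * a l i + 0 * b l i"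
        by (rule sum_two[OF k l kl])
      also have "\<dots> = w i * (x0 * p + y0 * q + \<mu> * p')"
        using aw[OF i] aw'[OF i] w'\<mu>[OF i] by (simp add: algebra_simps)
      also have "\<dots> = 0" using e1 by simp
      finally show "(\<Sum>m\<in>{0..<N}. ?x m * a m i + ?y m * b m i) = 0" .
    qed
    show "\<forall>j<N. (\<Sum>m\<in>{0..<N}. ?x m * c m j + ?y m * d m j) = 0"
    proof (intro allI impI)
      fix j assume j: "j < N"
      have "(\<Sum>m\<in>{0..<N}. ?x m * c m j + ?y m * d m j) = x0 * c k j + y0 * d k j + 1 * c l j + 0 * d l j"
        by (rule sum_two[OF k l kl])
      also have "\<dots> = z j * (- x0 * q + y0 * p - \<mu> * q')"
        using cz[OF j] cz'[OF j] z'\<mu>[OF j] by (simp add: algebra_simps)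
      also have "\<dots> = 0" using e2 by simp
      finally show "(\<Sum>m\<in>{0..<N}. ?x m * c m j + ?y m * d m j) = 0" .
    qed
  qed
  thus False using l kl by auto
qed

lemma core:
  assumes "0 < N"
  shows "\<exists>p q. (p \<noteq> 0 \<or> q \<noteq> 0) \<and> (\<forall>k<N. \<forall>i<N. q * a k i = p * b k i \<and> p * c k i + q * d k i = 0)"
proof -
  have A: "pk 0 \<noteq> 0 \<or> qk 0 \<noteq> 0" using ik[OF assms] by auto
  have B: "\<forall>k<N. \<forall>i<N. qk 0 * a k i = pk 0 * b k i \<and> pk 0 * c k i + qk 0 * d k i = 0"
  proof (intro allI impI)
    fix k i assume k: "k < N" and i: "i < N"
    show "qk 0 * a k i = pk 0 * b k i \<and> pk 0 * c k i + qk 0 * d k i = 0"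
    proof (cases "k = 0")
      case True
      then show ?thesis using dirk[OF k] i by auto
    next
      case False
      have cr: "qk 0 * pk k = pk 0 * qk k" using cross[OF assms k] False by auto
      show ?thesis
      proof
        show "qk 0 * a k i = pk 0 * b k i"
          by (rule par_trans[OF cr]) (use dirk(1)[OF k] i ik[OF k] in auto)
        show "pk 0 * c k i + qk 0 * d k i = 0"
          by (rule par_perp[OF cr]) (use dirk(2)[OF k] i ik[OF k] in auto)
      qed
    qed
  qed
  show ?thesis using A B by blast
qed

end




lemma ind01: "0 \<le> (if P then 1 else 0::real) \<and> (if P then 1 else 0::real) \<le> 1" by simp

lemma H1_from_cond:
  fixes n :: nat and S :: "real mat"
  assumes n: "n > 0" and Ssym: "symplectic (2*n) S"
    and cond: "\<forall>G. cov_mat n G \<longrightarrow>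
           (let M = S * four_block_mat G (0\<^sub>m (2*n) (2*n)) (0\<^sub>m (2*n) (2*n)) G * transpose_mat S
            in \<forall>i j. i < 2*n \<and> 2*n \<le> j \<and> j < 4*n \<longrightarrow> M $$ (i,j) = 0 \<and> M $$ (j,i) = 0)"
    and k: "k < 2*n" and l: "l < 2*n" and i: "i < 2*n" and j: "j < 2*n"
  shows "S$$(i,k) * S$$(j+2*n,l) + S$$(i,l) * S$$(j+2*n,k) + S$$(i,k+2*n) * S$$(j+2*n,l+2*n) + S$$(i,l+2*n) * S$$(j+2*n,k+2*n) = 0"
proof -
  define N where "N = 2*n"
  have S: "S \<in> carrier_mat (N+N) (N+N)" using Ssym unfolding symplectic_def N_def by (simp add: mult_2)
  define t :: real where "t = 6 * n"
  define Gm where "Gm c = mat N N (\<lambda>(u,w). (if u = w then t else 0) + c * ((if u = k \<and> w = l then 1 else 0) + (if u = l \<and> w = k then 1 else 0)))" for c :: real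
  define K where "K u w = S$$(i,u) * S$$(j+N,w) + S$$(i,u+N) * S$$(j+N,w+N)" for u w
  have val: "t * (\<Sum>u\<in>{0..<N}. K u u) + c * (K k l + K l k) = 0" if c: "0 \<le> c" "c \<le> 1" for c
  proof -
    define E where "E = mat N N (\<lambda>(u,w). c * ((if u = k \<and> w = l then 1 else 0) + (if u = l \<and> w = k then 1 else 0)))"
    have E: "E \<in> carrier_mat (2*n) (2*n)" unfolding E_def N_def by simp
    have Et: "transpose_mat E = E" unfolding E_def
    proof (rule eq_matI)
      fix i j assume "i < dim_row (mat N N (\<lambda>(u,w). c * ((if u = k \<and> w = l then 1 else 0) + (if u = l \<and> w = k then 1 else 0))))"
         "j < dim_col (mat N N (\<lambda>(u,w). c * ((if u = k \<and> w = l then 1 else 0) + (if u = l \<and> w = k then 1 else 0))))"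
      thus "transpose_mat (mat N N (\<lambda>(u,w). c * ((if u = k \<and> w = l then 1 else 0) + (if u = l \<and> w = k then 1 else 0)))) $$ (i,j)
         = mat N N (\<lambda>(u,w). c * ((if u = k \<and> w = l then 1 else 0) + (if u = l \<and> w = k then 1 else 0))) $$ (i,j)"
        by (simp add: add.commute conj_commute)
    qed simp_all
    have Eb: "\<forall>u<2*n. \<forall>w<2*n. \<bar>E$$(u,w)\<bar> \<le> 2"
    proof (intro allI impI)
      fix u w assume u: "u < 2*n" and w: "w < 2*n"
      define X :: real where "X = (if u = k \<and> w = l then 1 else 0) + (if u = l \<and> w = k then 1 else 0)"
      have e: "E$$(u,w) = c * X"
        unfolding E_def N_def X_def using u w by simp
      have X2: "\<bar>X\<bar> \<le> 2" unfolding X_def using ind01[of "u = k \<and> w = l"] ind01[of "u = l \<and> w = k"] by linarith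
      have c1: "\<bar>c\<bar> \<le> 1" using c by simp
      have "\<bar>c\<bar> * \<bar>X\<bar> \<le> 1 * 2" by (rule mult_mono[OF c1 X2]) simp_all
      thus "\<bar>E$$(u,w)\<bar> \<le> 2" unfolding e abs_mult by simp
    qed
    have GE: "Gm c = t \<cdot>\<^sub>m 1\<^sub>m (2*n) + E" 
    proof (rule eq_matI)
      fix u w assume "u < dim_row (t \<cdot>\<^sub>m 1\<^sub>m (2*n) + E)" "w < dim_col (t \<cdot>\<^sub>m 1\<^sub>m (2*n) + E)"
      hence u: "u < N" and w: "w < N" using E unfolding N_def by auto
      show "Gm c $$ (u,w) = (t \<cdot>\<^sub>m 1\<^sub>m (2*n) + E) $$ (u,w)"
        unfolding Gm_def E_def using u w unfolding N_def by simp
    qed (simp_all add: Gm_def E_def N_def)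
    have cov: "cov_mat n (Gm c)" unfolding GE by (rule cov_mat_tE[OF E Et Eb]) (simp add: t_def)
    have G: "Gm c \<in> carrier_mat N N" unfolding Gm_def by simp
    have "(S * four_block_mat (Gm c) (0\<^sub>m N N) (0\<^sub>m N N) (Gm c) * transpose_mat S) $$ (i, j+N) = 0"
      using cond[rule_format, OF cov] i j unfolding N_def Let_def by auto
    moreover have "(S * four_block_mat (Gm c) (0\<^sub>m N N) (0\<^sub>m N N) (Gm c) * transpose_mat S) $$ (i, j+N)
       = (\<Sum>w\<in>{0..<N}. \<Sum>u\<in>{0..<N}. Gm c $$ (u,w) * K u w)"
      unfolding K_def by (rule blk_entry[OF S G]) (use i j N_def in auto)
    moreover have "(\<Sum>w\<in>{0..<N}. \<Sum>u\<in>{0..<N}. Gm c $$ (u,w) * K u w) =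
       (\<Sum>w\<in>{0..<N}. \<Sum>u\<in>{0..<N}. ((if u = w then t else 0) + c * ((if u = k \<and> w = l then 1 else 0) + (if u = l \<and> w = k then 1 else 0))) * K u w)"
      unfolding Gm_def by (intro sum.cong refl) simp
    moreover have "\<dots> = t * (\<Sum>u\<in>{0..<N}. K u u) + c * (K k l + K l k)"
      by (rule dsum) (use k l N_def in auto)
    ultimately show ?thesis by simp
  qed
  have v0: "t * (\<Sum>u\<in>{0..<N}. K u u) + 0 * (K k l + K l k) = 0" by (rule val) simp_all
  have v1: "t * (\<Sum>u\<in>{0..<N}. K u u) + 1 * (K k l + K l k) = 0" by (rule val) simp_all
  have a0: "t * (\<Sum>u\<in>{0..<N}. K u u) = 0" using v0 by (simp only: mult_zero_left add_0_right)
  have b0: "t * (\<Sum>u\<in>{0..<N}. K u u) + (K k l + K l k) = 0" using v1 by (simp only: mult_1)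
  have "K k l + K l k = 0" using b0 unfolding a0 by (simp only: add_0_left)
  thus ?thesis unfolding K_def N_def by (simp add: algebra_simps)
qed

lemma row_zero_contra:
  fixes n :: nat and S :: "real mat"
  assumes n: "n > 0" and Ssym: "symplectic (2*n) S"
    and r: "r < 2*n + 2*n" and ev: "even r" and z: "\<forall>u < 2*n + 2*n. S$$(r,u) = 0"
  shows False
proof -
  define N where "N = 2*n"
  have S: "S \<in> carrier_mat (N+N) (N+N)" using Ssym unfolding symplectic_def N_def by (simp add: mult_2)
  have J: "sympl_form (2*n) = four_block_mat (sympl_form n) (0\<^sub>m N N) (0\<^sub>m N N) (sympl_form n)"
    unfolding N_def by (rule sf_block)
  have r1: "r + 1 < N + N" using r ev unfolding N_def by presburger
  have "(S * sympl_form (2*n) * transpose_mat S) $$ (r, r+1) = sympl_form (2*n) $$ (r, r+1)"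
    using Ssym unfolding symplectic_def by simp
  also have "\<dots> = 1" using r1 ev by (simp add: sf_idx N_def)
  finally have one: "(S * sympl_form (2*n) * transpose_mat S) $$ (r, r+1) = 1" .
  have "(S * sympl_form (2*n) * transpose_mat S) $$ (r, r+1) =
     (\<Sum>w\<in>{0..<N}. \<Sum>u\<in>{0..<N}. sympl_form n $$ (u,w) * (S$$(r,u) * S$$(r+1,w) + S$$(r,u+N) * S$$(r+1,w+N)))"
    unfolding J by (rule blk_entry[OF S]) (use r r1 N_def in auto)
  also have "\<dots> = 0" using z unfolding N_def by auto
  finally show False using one by simp
qed


lemma main_core:
  fixes n :: nat and S :: "real mat"
  assumes n: "n > 0" and Ssym: "symplectic (2*n) S"
    and cond: "\<forall>G. cov_mat n G \<longrightarrow>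
           (let M = S * four_block_mat G (0\<^sub>m (2*n) (2*n)) (0\<^sub>m (2*n) (2*n)) G * transpose_mat S
            in \<forall>i j. i < 2*n \<and> 2*n \<le> j \<and> j < 4*n \<longrightarrow> M $$ (i,j) = 0 \<and> M $$ (j,i) = 0)"
  shows "\<exists>p q. (p \<noteq> 0 \<or> q \<noteq> 0) \<and> (\<forall>k<2*n. \<forall>i<2*n. q * S$$(i,k) = p * S$$(i,k+2*n) \<and> p * S$$(i+2*n,k) + q * S$$(i+2*n,k+2*n) = 0)"
proof -
  define N where "N = 2*n"
  have NN: "2*(2*n) = N+N" unfolding N_def by simp
  have "coreloc N (\<lambda>k i. S$$(i,k)) (\<lambda>k i. S$$(i,k+N)) (\<lambda>k j. S$$(j+N,k)) (\<lambda>k j. S$$(j+N,k+N))"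
  proof (unfold_locales)
    fix k l i j assume "k < N" "l < N" "i < N" "j < N"
    thus "S$$(i,k) * S$$(j+N,l) + S$$(i,l) * S$$(j+N,k) + S$$(i,k+N) * S$$(j+N,l+N) + S$$(i,l+N) * S$$(j+N,k+N) = 0"
      using H1_from_cond[OF n Ssym cond] unfolding N_def by blast
  next
    fix x y :: "nat \<Rightarrow> real"
    assume A: "\<forall>i<N. (\<Sum>m\<in>{0..<N}. x m * S$$(i,m) + y m * S$$(i,m+N)) = 0"
      and C: "\<forall>j<N. (\<Sum>m\<in>{0..<N}. x m * S$$(j+N,m) + y m * S$$(j+N,m+N)) = 0"
    define X where "X u = (if u < N then x u else y (u - N))" for u
    have sp: "(\<Sum>u\<in>{0..<2*(2*n)}. S$$(r,u) * X u) = (\<Sum>m\<in>{0..<N}. x m * S$$(r,m) + y m * S$$(r,m+N))" for r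
    proof -
      have "(\<Sum>u\<in>{0..<2*(2*n)}. S$$(r,u) * X u) = (\<Sum>u\<in>{0..<N}. S$$(r,u) * X u) + (\<Sum>u\<in>{0..<N}. S$$(r,u+N) * X (u+N))"
        unfolding NN by (rule sum_split2)
      also have "\<dots> = (\<Sum>m\<in>{0..<N}. x m * S$$(r,m)) + (\<Sum>m\<in>{0..<N}. y m * S$$(r,m+N))"
        unfolding X_def by (intro arg_cong2[where f="(+)"] sum.cong refl) (simp_all add: mult.commute)
      also have "\<dots> = (\<Sum>m\<in>{0..<N}. x m * S$$(r,m) + y m * S$$(r,m+N))" by (simp add: sum.distrib)
      finally show ?thesis .
    qed
    have "\<forall>r<2*(2*n). (\<Sum>u\<in>{0..<2*(2*n)}. S$$(r,u) * X u) = 0"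
    proof (intro allI impI)
      fix r assume r: "r < 2*(2*n)"
      show "(\<Sum>u\<in>{0..<2*(2*n)}. S$$(r,u) * X u) = 0"
      proof (cases "r < N")
        case True thus ?thesis unfolding sp using A by blast
      next
        case False
        then obtain j where j: "r = j + N" "j < N" using r unfolding NN by (metis add.commute le_add_diff_inverse not_less add_less_cancel_left)
        thus ?thesis unfolding sp using C by blast
      qed
    qed
    hence X0: "\<forall>u<2*(2*n). X u = 0" by (rule sympl_inj'[OF Ssym])
    show "\<forall>m<N. x m = 0 \<and> y m = 0"
    proof (intro allI impI)
      fix m assume m: "m < N"
      have "X m = 0" "X (m+N) = 0" using X0 m unfolding NN by auto
      thus "x m = 0 \<and> y m = 0" unfolding X_def using m by simp
    qed
  next
    show "\<exists>k<N. \<exists>i<N. S$$(i,k) \<noteq> 0 \<or> S$$(i,k+N) \<noteq> 0"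
    proof (rule ccontr)
      assume "\<not> (\<exists>k<N. \<exists>i<N. S$$(i,k) \<noteq> 0 \<or> S$$(i,k+N) \<noteq> 0)"
      hence z: "\<forall>k<N. \<forall>i<N. S$$(i,k) = 0 \<and> S$$(i,k+N) = 0" by blast
      have "\<forall>u < 2*n + 2*n. S$$(0,u) = 0"
      proof (intro allI impI)
        fix u assume u: "u < 2*n + 2*n"
        show "S$$(0,u) = 0"
        proof (cases "u < N")
          case True thus ?thesis using z N_def n by auto
        next
          case False
          then obtain k where "u = k + N" "k < N" using u unfolding N_def by (metis add.commute le_add_diff_inverse not_less add_less_cancel_left)
          thus ?thesis using z N_def n by auto
        qed
      qed
      thus False using row_zero_contra[OF n Ssym, where r=0] n by simp
    qed
  next
    show "\<exists>k<N. \<exists>j<N. S$$(j+N,k) \<noteq> 0 \<or> S$$(j+N,k+N) \<noteq> 0"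
    proof (rule ccontr)
      assume "\<not> (\<exists>k<N. \<exists>j<N. S$$(j+N,k) \<noteq> 0 \<or> S$$(j+N,k+N) \<noteq> 0)"
      hence z: "\<forall>k<N. \<forall>j<N. S$$(j+N,k) = 0 \<and> S$$(j+N,k+N) = 0" by blast
      have "\<forall>u < 2*n + 2*n. S$$(N,u) = 0"
      proof (intro allI impI)
        fix u assume u: "u < 2*n + 2*n"
        have z0: "\<forall>k<N. S$$(N,k) = 0 \<and> S$$(N,k+N) = 0" using z N_def n by (metis add_0 mult_pos_pos zero_less_numeral)
        show "S$$(N,u) = 0"
        proof (cases "u < N")
          case True thus ?thesis using z0 by blast
        next
          case False
          then obtain k where "u = k + N" "k < N" using u unfolding N_def by (metis add.commute le_add_diff_inverse not_less add_less_cancel_left)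
          thus ?thesis using z0 by blast
        qed
      qed
      thus False using row_zero_contra[OF n Ssym, where r=N] n unfolding N_def by simp
    qed
  qed
  then interpret coreloc N "\<lambda>k i. S$$(i,k)" "\<lambda>k i. S$$(i,k+N)" "\<lambda>k j. S$$(j+N,k)" "\<lambda>k j. S$$(j+N,k+N)" .
  have "0 < N" unfolding N_def using n by simp
  from core[OF this] show ?thesis unfolding N_def .
qed


lemma trip_entry:
  fixes X G :: "real mat"
  assumes X: "X \<in> carrier_mat N N" and G: "G \<in> carrier_mat N N" and i: "i < N" and j: "j < N"
  shows "(X * G * transpose_mat X) $$ (i,j) = (\<Sum>w\<in>{0..<N}. \<Sum>u\<in>{0..<N}. G$$(u,w) * (X$$(i,u) * X$$(j,w)))"
proof -
  have XG: "(X * G) $$ (i,w) = (\<Sum>u\<in>{0..<N}. X$$(i,u) * G$$(u,w))" if "w < N" for w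
    using X G i that by (simp add: scalar_prod_def carrier_matD)
  have "(X * G * transpose_mat X) $$ (i,j) = (\<Sum>w\<in>{0..<N}. (X * G) $$ (i,w) * X$$(j,w))"
    using X G i j by (simp add: scalar_prod_def carrier_matD del: assoc_mult_mat)
  also have "\<dots> = (\<Sum>w\<in>{0..<N}. (\<Sum>u\<in>{0..<N}. X$$(i,u) * G$$(u,w)) * X$$(j,w))"
    using XG by simp
  also have "\<dots> = (\<Sum>w\<in>{0..<N}. \<Sum>u\<in>{0..<N}. G$$(u,w) * (X$$(i,u) * X$$(j,w)))"
    by (simp add: sum_distrib_left sum_distrib_right mult_ac)
  finally show ?thesis .
qed

lemma S_form:
  fixes S X Y :: "real mat"
  assumes S: "S \<in> carrier_mat (N+N) (N+N)" and X: "X \<in> carrier_mat N N" and Y: "Y \<in> carrier_mat N N"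
    and h: "\<And>i k. i < N \<Longrightarrow> k < N \<Longrightarrow> S$$(i,k) = a1 * X$$(i,k) \<and> S$$(i,k+N) = a2 * X$$(i,k) \<and>
                S$$(i+N,k) = a3 * Y$$(i,k) \<and> S$$(i+N,k+N) = a4 * Y$$(i,k)"
  shows "S = four_block_mat (a1 \<cdot>\<^sub>m X) (a2 \<cdot>\<^sub>m X) (a3 \<cdot>\<^sub>m Y) (a4 \<cdot>\<^sub>m Y)"
proof (rule eq_matI)
  fix i j assume "i < dim_row (four_block_mat (a1 \<cdot>\<^sub>m X) (a2 \<cdot>\<^sub>m X) (a3 \<cdot>\<^sub>m Y) (a4 \<cdot>\<^sub>m Y))"
    "j < dim_col (four_block_mat (a1 \<cdot>\<^sub>m X) (a2 \<cdot>\<^sub>m X) (a3 \<cdot>\<^sub>m Y) (a4 \<cdot>\<^sub>m Y))"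
  hence i: "i < N+N" and j: "j < N+N" using X Y by auto
  show "S $$ (i,j) = four_block_mat (a1 \<cdot>\<^sub>m X) (a2 \<cdot>\<^sub>m X) (a3 \<cdot>\<^sub>m Y) (a4 \<cdot>\<^sub>m Y) $$ (i,j)"
  proof (cases "i < N")
    case True
    show ?thesis
    proof (cases "j < N")
      case True
      thus ?thesis using \<open>i < N\<close> h[of i j] X Y by simp
    next
      case False
      then obtain k where k: "j = k + N" "k < N" using j by (metis add.commute le_add_diff_inverse not_less add_less_cancel_left)
      thus ?thesis using \<open>i < N\<close> h[of i k] X Y by simp
    qed
  next
    case False
    then obtain i' where i': "i = i' + N" "i' < N" using i by (metis add.commute le_add_diff_inverse not_less add_less_cancel_left)
    show ?thesis
    proof (cases "j < N")
      case True
      thus ?thesis using i' h[of i' j] X Y by simp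
    next
      case False
      then obtain k where k: "j = k + N" "k < N" using j by (metis add.commute le_add_diff_inverse not_less add_less_cancel_left)
      thus ?thesis using i' h[of i' k] X Y by simp
    qed
  qed
qed (use S X Y in auto)

lemma blk_mix:
  fixes X Y :: "real mat"
  assumes X: "X \<in> carrier_mat N N" and Y: "Y \<in> carrier_mat N N"
  shows "four_block_mat X (0\<^sub>m N N) (0\<^sub>m N N) Y * four_block_mat (a \<cdot>\<^sub>m 1\<^sub>m N) (b \<cdot>\<^sub>m 1\<^sub>m N) (c \<cdot>\<^sub>m 1\<^sub>m N) (d \<cdot>\<^sub>m 1\<^sub>m N)
    = four_block_mat (a \<cdot>\<^sub>m X) (b \<cdot>\<^sub>m X) (c \<cdot>\<^sub>m Y) (d \<cdot>\<^sub>m Y)"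
proof -
  have one: "1\<^sub>m N \<in> carrier_mat N N" by simp
  have m: "Z * (e \<cdot>\<^sub>m 1\<^sub>m N) = e \<cdot>\<^sub>m Z" if "Z \<in> carrier_mat N N" for Z :: "real mat" and e
    using mult_smult_distrib[OF that one, of e] that by simp
  have z: "0\<^sub>m N N * (e \<cdot>\<^sub>m 1\<^sub>m N) = (0\<^sub>m N N :: real mat)" for e :: real by simp
  have "four_block_mat X (0\<^sub>m N N) (0\<^sub>m N N) Y * four_block_mat (a \<cdot>\<^sub>m 1\<^sub>m N) (b \<cdot>\<^sub>m 1\<^sub>m N) (c \<cdot>\<^sub>m 1\<^sub>m N) (d \<cdot>\<^sub>m 1\<^sub>m N)
    = four_block_mat (X * (a \<cdot>\<^sub>m 1\<^sub>m N) + 0\<^sub>m N N * (c \<cdot>\<^sub>m 1\<^sub>m N)) (X * (b \<cdot>\<^sub>m 1\<^sub>m N) + 0\<^sub>m N N * (d \<cdot>\<^sub>m 1\<^sub>m N))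
        (0\<^sub>m N N * (a \<cdot>\<^sub>m 1\<^sub>m N) + Y * (c \<cdot>\<^sub>m 1\<^sub>m N)) (0\<^sub>m N N * (b \<cdot>\<^sub>m 1\<^sub>m N) + Y * (d \<cdot>\<^sub>m 1\<^sub>m N))"
    by (rule mult_four_block_mat) (use X Y in auto)
  also have "\<dots> = four_block_mat (a \<cdot>\<^sub>m X) (b \<cdot>\<^sub>m X) (c \<cdot>\<^sub>m Y) (d \<cdot>\<^sub>m Y)"
    unfolding m[OF X] m[OF Y] z using X Y by simp
  finally show ?thesis .
qed


lemma sympl_block_entry:
  fixes S :: "real mat" and n :: nat
  assumes Ssym: "symplectic (2*n) S" and i: "i < 2*n + 2*n" and j: "j < 2*n + 2*n"
  shows "(\<Sum>w\<in>{0..<2*n}. \<Sum>u\<in>{0..<2*n}. sympl_form n $$ (u,w) * (S$$(i,u) * S$$(j,w) + S$$(i,u+2*n) * S$$(j,w+2*n)))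
     = four_block_mat (sympl_form n) (0\<^sub>m (2*n) (2*n)) (0\<^sub>m (2*n) (2*n)) (sympl_form n) $$ (i,j)"
proof -
  have S: "S \<in> carrier_mat (2*n+2*n) (2*n+2*n)" using Ssym unfolding symplectic_def by (simp add: mult_2)
  have "(S * four_block_mat (sympl_form n) (0\<^sub>m (2*n) (2*n)) (0\<^sub>m (2*n) (2*n)) (sympl_form n) * transpose_mat S) $$ (i,j)
     = (\<Sum>w\<in>{0..<2*n}. \<Sum>u\<in>{0..<2*n}. sympl_form n $$ (u,w) * (S$$(i,u) * S$$(j,w) + S$$(i,u+2*n) * S$$(j,w+2*n)))"
    by (rule blk_entry[OF S sf_carrier i j])
  moreover have "S * four_block_mat (sympl_form n) (0\<^sub>m (2*n) (2*n)) (0\<^sub>m (2*n) (2*n)) (sympl_form n) * transpose_mat S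
     = four_block_mat (sympl_form n) (0\<^sub>m (2*n) (2*n)) (0\<^sub>m (2*n) (2*n)) (sympl_form n)"
    using Ssym unfolding symplectic_def sf_block by simp
  ultimately show ?thesis by simp
qed

theorem lemma2:
  fixes n :: nat and S :: "real mat"
  assumes "symplectic (2*n) S"
    and "\<forall>G. cov_mat n G \<longrightarrow>
           (let M = S * four_block_mat G (0\<^sub>m (2*n) (2*n)) (0\<^sub>m (2*n) (2*n)) G * transpose_mat S
            in \<forall>i j. i < 2*n \<and> 2*n \<le> j \<and> j < 4*n \<longrightarrow> M $$ (i,j) = 0 \<and> M $$ (j,i) = 0)"
  shows "(\<exists>X Y (\<alpha>::ereal). symplectic n X \<and> symplectic n Y \<and>
            S = four_block_mat X (0\<^sub>m (2*n) (2*n)) (0\<^sub>m (2*n) (2*n)) Y * mixA n \<alpha>)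
       \<or> (\<exists>X Y (\<gamma>::ereal). symplectic n X \<and> symplectic n Y \<and>
            S = four_block_mat (0\<^sub>m (2*n) (2*n)) X Y (0\<^sub>m (2*n) (2*n)) * mixB n \<gamma>)"
proof (cases "n = 0")
  case True
  have S: "S \<in> carrier_mat 0 0" using assms(1) True unfolding symplectic_def by simp
  have sy: "symplectic 0 (1\<^sub>m 0)" unfolding symplectic_def by (auto intro!: eq_matI simp: sympl_form_def)
  have "S = four_block_mat (1\<^sub>m 0) (0\<^sub>m 0 0) (0\<^sub>m 0 0) (1\<^sub>m 0) * mixA 0 0"
    by (rule eq_matI) (use S in \<open>auto simp: mixA_def zero_ereal_def\<close>)
  hence eq: "S = four_block_mat (1\<^sub>m 0) (0\<^sub>m (2*n) (2*n)) (0\<^sub>m (2*n) (2*n)) (1\<^sub>m 0) * mixA n 0" using True by simp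
  have sy': "symplectic n (1\<^sub>m 0)" using sy True by simp
  show ?thesis using eq sy' by blast
next
  case False
  hence n: "n > 0" by simp
  note Ssym = assms(1)
  define N where "N = 2*n"
  have S: "S \<in> carrier_mat (N+N) (N+N)" using Ssym unfolding symplectic_def N_def by (simp add: mult_2)
  obtain p q where pq: "p \<noteq> 0 \<or> q \<noteq> 0"
    and rel: "\<forall>k<2*n. \<forall>i<2*n. q * S$$(i,k) = p * S$$(i,k+2*n) \<and> p * S$$(i+2*n,k) + q * S$$(i+2*n,k+2*n) = 0"
    using main_core[OF n Ssym assms(2)] by blast
  define \<rho> where "\<rho> = sqrt (p^2 + q^2)"
  have \<rho>: "\<rho> > 0" unfolding \<rho>_def using pq by (auto simp: sum_power2_gt_zero_iff)
  define sg :: real where "sg = (if p > 0 \<or> (p = 0 \<and> q > 0) then 1 else -1)"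
  define cc where "cc = sg * p / \<rho>"
  define ss where "ss = sg * q / \<rho>"
  have sg2: "sg * sg = 1" unfolding sg_def by simp
  have ccss: "cc^2 + ss^2 = 1"
  proof -
    have "cc^2 + ss^2 = (sg*sg) * (p^2 + q^2) / \<rho>^2" unfolding cc_def ss_def by (simp add: power2_eq_square field_simps add_divide_distrib)
    also have "\<dots> = 1" using \<rho> pq unfolding sg2 \<rho>_def by simp
    finally show ?thesis .
  qed
  have cc0: "cc \<ge> 0" unfolding cc_def sg_def using \<rho> by (auto simp: divide_nonneg_pos)
  have cc_ss: "cc = 0 \<Longrightarrow> ss = 1"
  proof -
    assume "cc = 0"
    hence p0: "p = 0" unfolding cc_def sg_def using \<rho> by (auto split: if_splits)
    hence "q \<noteq> 0" using pq by simp
    have "\<rho> = \<bar>q\<bar>" unfolding \<rho>_def p0 by simp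
    thus "ss = 1" unfolding ss_def sg_def using p0 \<open>q \<noteq> 0\<close> by auto
  qed
  have rel1: "ss * S$$(i,k) = cc * S$$(i,k+N)" if "i < N" "k < N" for i k
  proof -
    have "q * S$$(i,k) = p * S$$(i,k+N)" using rel that unfolding N_def by blast
    hence "(sg/\<rho>) * (q * S$$(i,k)) = (sg/\<rho>) * (p * S$$(i,k+N))" by simp
    thus ?thesis unfolding cc_def ss_def by (simp add: field_simps)
  qed
  have rel2: "cc * S$$(i+N,k) + ss * S$$(i+N,k+N) = 0" if "i < N" "k < N" for i k
  proof -
    have "p * S$$(i+N,k) + q * S$$(i+N,k+N) = 0" using rel that unfolding N_def by blast
    moreover have "cc * S$$(i+N,k) + ss * S$$(i+N,k+N) = (sg/\<rho>) * (p * S$$(i+N,k) + q * S$$(i+N,k+N))"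
      unfolding cc_def ss_def using \<rho> by (simp add: field_simps)
    ultimately show ?thesis by simp
  qed
  define X where "X = mat N N (\<lambda>(i,k). cc * S$$(i,k) + ss * S$$(i,k+N))"
  define Y where "Y = mat N N (\<lambda>(i,k). - ss * S$$(i+N,k) + cc * S$$(i+N,k+N))"
  have X: "X \<in> carrier_mat N N" and Y: "Y \<in> carrier_mat N N" unfolding X_def Y_def by auto
  have der: "S$$(i,k) = cc * X$$(i,k) \<and> S$$(i,k+N) = ss * X$$(i,k) \<and>
         S$$(i+N,k) = (- ss) * Y$$(i,k) \<and> S$$(i+N,k+N) = cc * Y$$(i,k)" if ik: "i < N" "k < N" for i k
  proof -
    let ?a = "S$$(i,k)" and ?b = "S$$(i,k+N)" and ?c = "S$$(i+N,k)" and ?d = "S$$(i+N,k+N)"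
    have r1: "ss * ?a = cc * ?b" by (rule rel1[OF ik])
    have r2: "cc * ?c + ss * ?d = 0" by (rule rel2[OF ik])
    have Xe: "X$$(i,k) = cc * ?a + ss * ?b" unfolding X_def using ik by simp
    have Ye: "Y$$(i,k) = - ss * ?c + cc * ?d" unfolding Y_def using ik by simp
    have e1: "cc * (cc * ?a + ss * ?b) - ?a = ss * (cc * ?b - ss * ?a) + (cc^2 + ss^2 - 1) * ?a"
      by (simp add: algebra_simps power2_eq_square)
    have e2: "ss * (cc * ?a + ss * ?b) - ?b = cc * (ss * ?a - cc * ?b) + (cc^2 + ss^2 - 1) * ?b"
      by (simp add: algebra_simps power2_eq_square)
    have e3: "(- ss) * (- ss * ?c + cc * ?d) - ?c = - cc * (cc * ?c + ss * ?d) + (cc^2 + ss^2 - 1) * ?c"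
      by (simp add: algebra_simps power2_eq_square)
    have e4: "cc * (- ss * ?c + cc * ?d) - ?d = - ss * (cc * ?c + ss * ?d) + (cc^2 + ss^2 - 1) * ?d"
      by (simp add: algebra_simps power2_eq_square)
    show ?thesis unfolding Xe Ye using e1 e2 e3 e4 r1 r2 ccss by simp
  qed
  have Sf: "S = four_block_mat (cc \<cdot>\<^sub>m X) (ss \<cdot>\<^sub>m X) ((- ss) \<cdot>\<^sub>m Y) (cc \<cdot>\<^sub>m Y)"
    by (rule S_form[OF S X Y der])
  have sf: "sympl_form n \<in> carrier_mat N N" unfolding N_def by simp
  have symX: "symplectic n X" unfolding symplectic_def
  proof
    show "X \<in> carrier_mat (2*n) (2*n)" using X unfolding N_def .
    show "X * sympl_form n * transpose_mat X = sympl_form n"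
    proof (rule eq_matI)
      fix i j assume "i < dim_row (sympl_form n)" "j < dim_col (sympl_form n)"
      hence i: "i < N" and j: "j < N" unfolding N_def by auto
      have "(X * sympl_form n * transpose_mat X) $$ (i,j) = (\<Sum>w\<in>{0..<N}. \<Sum>u\<in>{0..<N}. sympl_form n $$ (u,w) * (X$$(i,u) * X$$(j,w)))"
        by (rule trip_entry[OF X sf i j])
      also have "\<dots> = (\<Sum>w\<in>{0..<N}. \<Sum>u\<in>{0..<N}. sympl_form n $$ (u,w) * (S$$(i,u) * S$$(j,w) + S$$(i,u+N) * S$$(j,w+N)))"
      proof (intro sum.cong refl)
        fix w u assume "w \<in> {0..<N}" "u \<in> {0..<N}"
        hence w: "w < N" and u: "u < N" by auto
        have "S$$(i,u) * S$$(j,w) + S$$(i,u+N) * S$$(j,w+N) = (cc^2 + ss^2) * (X$$(i,u) * X$$(j,w))"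
          using der[OF i u] der[OF j w] by (simp add: algebra_simps power2_eq_square)
        thus "sympl_form n $$ (u,w) * (X$$(i,u) * X$$(j,w)) = sympl_form n $$ (u,w) * (S$$(i,u) * S$$(j,w) + S$$(i,u+N) * S$$(j,w+N))"
          using ccss by simp
      qed
      also have "\<dots> = four_block_mat (sympl_form n) (0\<^sub>m (2*n) (2*n)) (0\<^sub>m (2*n) (2*n)) (sympl_form n) $$ (i,j)"
        using sympl_block_entry[OF Ssym, of i j] i j unfolding N_def by simp
      also have "\<dots> = sympl_form n $$ (i,j)" using i j unfolding N_def by simp
      finally show "(X * sympl_form n * transpose_mat X) $$ (i,j) = sympl_form n $$ (i,j)" .
    qed (use X in \<open>auto simp: N_def\<close>)
  qed
  have symY: "symplectic n Y" unfolding symplectic_def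
  proof
    show "Y \<in> carrier_mat (2*n) (2*n)" using Y unfolding N_def .
    show "Y * sympl_form n * transpose_mat Y = sympl_form n"
    proof (rule eq_matI)
      fix i j assume "i < dim_row (sympl_form n)" "j < dim_col (sympl_form n)"
      hence i: "i < N" and j: "j < N" unfolding N_def by auto
      have "(Y * sympl_form n * transpose_mat Y) $$ (i,j) = (\<Sum>w\<in>{0..<N}. \<Sum>u\<in>{0..<N}. sympl_form n $$ (u,w) * (Y$$(i,u) * Y$$(j,w)))"
        by (rule trip_entry[OF Y sf i j])
      also have "\<dots> = (\<Sum>w\<in>{0..<N}. \<Sum>u\<in>{0..<N}. sympl_form n $$ (u,w) * (S$$(i+N,u) * S$$(j+N,w) + S$$(i+N,u+N) * S$$(j+N,w+N)))"
      proof (intro sum.cong refl)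
        fix w u assume "w \<in> {0..<N}" "u \<in> {0..<N}"
        hence w: "w < N" and u: "u < N" by auto
        have "S$$(i+N,u) * S$$(j+N,w) + S$$(i+N,u+N) * S$$(j+N,w+N) = (cc^2 + ss^2) * (Y$$(i,u) * Y$$(j,w))"
          using der[OF i u] der[OF j w] by (simp add: algebra_simps power2_eq_square)
        thus "sympl_form n $$ (u,w) * (Y$$(i,u) * Y$$(j,w)) = sympl_form n $$ (u,w) * (S$$(i+N,u) * S$$(j+N,w) + S$$(i+N,u+N) * S$$(j+N,w+N))"
          using ccss by simp
      qed
      also have "\<dots> = four_block_mat (sympl_form n) (0\<^sub>m (2*n) (2*n)) (0\<^sub>m (2*n) (2*n)) (sympl_form n) $$ (i+N,j+N)"
        using sympl_block_entry[OF Ssym, of "i+N" "j+N"] i j unfolding N_def by simp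
      also have "\<dots> = sympl_form n $$ (i,j)" using i j unfolding N_def by simp
      finally show "(Y * sympl_form n * transpose_mat Y) $$ (i,j) = sympl_form n $$ (i,j)" .
    qed (use Y in \<open>auto simp: N_def\<close>)
  qed
  have blk: "four_block_mat X (0\<^sub>m N N) (0\<^sub>m N N) Y \<in> carrier_mat (N+N) (N+N)" using X Y by auto
  have one1: "1\<^sub>m N = (1::real) \<cdot>\<^sub>m 1\<^sub>m N" by (rule eq_matI) auto
  have zero0: "0\<^sub>m N N = (0::real) \<cdot>\<^sub>m 1\<^sub>m N" by (rule eq_matI) auto
  have "\<exists>\<alpha>. S = four_block_mat X (0\<^sub>m N N) (0\<^sub>m N N) Y * mixA n \<alpha>"
  proof (cases "cc = 0")
    case True
    hence ss1: "ss = 1" using cc_ss by simp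
    have "mixA n PInfty = four_block_mat (0 \<cdot>\<^sub>m 1\<^sub>m N) (1 \<cdot>\<^sub>m 1\<^sub>m N) ((-1) \<cdot>\<^sub>m 1\<^sub>m N) (0 \<cdot>\<^sub>m 1\<^sub>m N)"
      unfolding mixA_def N_def[symmetric] using one1 zero0 by simp
    hence "four_block_mat X (0\<^sub>m N N) (0\<^sub>m N N) Y * mixA n PInfty = four_block_mat (0 \<cdot>\<^sub>m X) (1 \<cdot>\<^sub>m X) ((-1) \<cdot>\<^sub>m Y) (0 \<cdot>\<^sub>m Y)"
      using blk_mix[OF X Y] by simp
    also have "\<dots> = S" unfolding Sf True ss1 by simp
    finally show ?thesis by metis
  next
    case False
    hence ccp: "cc > 0" using cc0 by simp
    define x where "x = ss / cc"
    have r: "1 / sqrt (1 + x^2) = cc"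
    proof -
      have "1 + x^2 = (cc^2 + ss^2) / cc^2" unfolding x_def using ccp by (simp add: field_simps power2_eq_square)
      also have "\<dots> = (1 / cc)^2" using ccss by (simp add: power_divide)
      finally have "sqrt (1 + x^2) = 1 / cc" using ccp by simp
      thus ?thesis by simp
    qed
    have "mixA n (ereal x) = cc \<cdot>\<^sub>m four_block_mat (1 \<cdot>\<^sub>m 1\<^sub>m N) (x \<cdot>\<^sub>m 1\<^sub>m N) ((-x) \<cdot>\<^sub>m 1\<^sub>m N) (1 \<cdot>\<^sub>m 1\<^sub>m N)"
      unfolding mixA_def N_def[symmetric] r[symmetric] using one1 by simp
    hence "four_block_mat X (0\<^sub>m N N) (0\<^sub>m N N) Y * mixA n (ereal x)
       = cc \<cdot>\<^sub>m (four_block_mat X (0\<^sub>m N N) (0\<^sub>m N N) Y * four_block_mat (1 \<cdot>\<^sub>m 1\<^sub>m N) (x \<cdot>\<^sub>m 1\<^sub>m N) ((-x) \<cdot>\<^sub>m 1\<^sub>m N) (1 \<cdot>\<^sub>m 1\<^sub>m N))"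
      using mult_smult_distrib[OF blk, of "four_block_mat (1 \<cdot>\<^sub>m 1\<^sub>m N) (x \<cdot>\<^sub>m 1\<^sub>m N) ((-x) \<cdot>\<^sub>m 1\<^sub>m N) (1 \<cdot>\<^sub>m 1\<^sub>m N)" "N+N" cc]
      by simp
    also have "\<dots> = cc \<cdot>\<^sub>m four_block_mat (1 \<cdot>\<^sub>m X) (x \<cdot>\<^sub>m X) ((-x) \<cdot>\<^sub>m Y) (1 \<cdot>\<^sub>m Y)"
      using blk_mix[OF X Y] by simp
    also have "\<dots> = S" unfolding Sf
    proof (rule eq_matI)
      fix i j assume ij: "i < dim_row (four_block_mat (cc \<cdot>\<^sub>m X) (ss \<cdot>\<^sub>m X) (- ss \<cdot>\<^sub>m Y) (cc \<cdot>\<^sub>m Y))"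
        "j < dim_col (four_block_mat (cc \<cdot>\<^sub>m X) (ss \<cdot>\<^sub>m X) (- ss \<cdot>\<^sub>m Y) (cc \<cdot>\<^sub>m Y))"
      have cx: "cc * x = ss" unfolding x_def using ccp by simp
      show "(cc \<cdot>\<^sub>m four_block_mat (1 \<cdot>\<^sub>m X) (x \<cdot>\<^sub>m X) ((-x) \<cdot>\<^sub>m Y) (1 \<cdot>\<^sub>m Y)) $$ (i,j) =
            four_block_mat (cc \<cdot>\<^sub>m X) (ss \<cdot>\<^sub>m X) (- ss \<cdot>\<^sub>m Y) (cc \<cdot>\<^sub>m Y) $$ (i,j)"
        using ij X Y cx by (simp add: mult.assoc[symmetric])
    qed (use X Y in auto)
    finally show ?thesis by metis
  qed
  thus ?thesis using symX symY unfolding N_def by blast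
qed


end
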